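(* Let $(\lambda,\vartheta,\zeta_0)$ be fluid model data as in the context. If $\lambda\mathbf E[B1_{\{D=\infty\}}]<1$ and $\mathbf E[\min\{B,D\}]<\infty$, then every fluid model solution $z(\cdot)$ is bounded on $[0,\infty)$.
   Context: $\overline{\mathbb R}_+=[0,\infty]$. Fluid model data: $\lambda>0$; $\vartheta$ a Borel probability measure on $\overline{\mathbb R}_+^2$ with $\vartheta(\{0\}\times\overline{\mathbb R}_+)=\vartheta(\overline{\mathbb R}_+\times\{0\})=\vartheta(\{(\infty,\infty)\})=0$, $(B,D)$ a random pair with law $\vartheta$, $\rho=\lambda\mathbf E[B]>1$; $\zeta_0$ a finite nonnegative Borel measure on $\overline{\mathbb R}_+^2$ with marginals free of atoms in $[0,\infty)$ and total mass $z_0$; if $z_0>0$, $(B^0,D^0)$ has law $\zeta_0/z_0$. A fluid model solution is a continuous function $z:[0,\infty)\to[0,\infty)$ with $\inf_{t>a}z(t)>0$ for all $a>0$ satisfying $z(t)=z_0\mathbf P(B^0>S(0,t);D^0>t)+\lambda\int_0^t\mathbf P(B>S(s,t);D>t-s)ds$ for $t\ge0$, where $S(u,v)=\int_u^vz(s)^{-1}ds$ (the first term is $0$ if $z_0=0$); equivalently $z$ is the total mass of a measure valued fluid model solution. *)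

theory Defs
  imports "HOL-Probability.Probability"
begin

definition fluid_data ::
  "real \<Rightarrow> (ennreal \<times> ennreal) measure \<Rightarrow> (ennreal \<times> ennreal) measure \<Rightarrow> bool" where
  "fluid_data lam \<theta> \<zeta>0 \<longleftrightarrow>
     lam > 0 \<and>
     prob_space \<theta> \<and> sets \<theta> = sets borel \<and>
     emeasure \<theta> ({0} \<times> UNIV) = 0 \<and>
     emeasure \<theta> (UNIV \<times> {0}) = 0 \<and>
     emeasure \<theta> {(\<top>, \<top>)} = 0 \<and>
     ennreal lam * (\<integral>\<^sup>+ x. fst x \<partial>\<theta>) > 1 \<and>
     finite_measure \<zeta>0 \<and> sets \<zeta>0 = sets borel \<and>
     (\<forall>x. x \<noteq> \<top> \<longrightarrow> emeasure \<zeta>0 ({x} \<times> UNIV) = 0 \<and> emeasure \<zeta>0 (UNIV \<times> {x}) = 0)"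

definition Sfun :: "(real \<Rightarrow> real) \<Rightarrow> real \<Rightarrow> real \<Rightarrow> ennreal" where
  "Sfun z u v = (\<integral>\<^sup>+ s. ennreal (1 / z s) * indicator {u..v} s \<partial>lborel)"

text \<open>Fluid model solution. The first term z0 P(B0 > S(0,t); D0 > t) is written
  as the \<zeta>0-measure of the corresponding event (this is 0 when z0 = 0).\<close>
definition fluid_solution ::
  "real \<Rightarrow> (ennreal \<times> ennreal) measure \<Rightarrow> (ennreal \<times> ennreal) measure \<Rightarrow> (real \<Rightarrow> real) \<Rightarrow> bool" where
  "fluid_solution lam \<theta> \<zeta>0 z \<longleftrightarrow>
     continuous_on {0..} z \<and>
     (\<forall>t\<ge>0. z t \<ge> 0) \<and>
     (\<forall>a>0. (INF t\<in>{a<..}. z t) > 0) \<and>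
     (\<forall>t\<ge>0. z t =
        measure \<zeta>0 {p. fst p > Sfun z 0 t \<and> snd p > ennreal t}
        + lam * (LINT s:{0..t}|lborel.
             measure \<theta> {p. fst p > Sfun z s t \<and> snd p > ennreal (t - s)}))"

end

theory Submission
  imports Defs
begin

lemma tail_bound:
  fixes \<theta> :: "(ennreal \<times> ennreal) measure" and X :: "ennreal \<times> ennreal \<Rightarrow> ennreal"
  assumes P: "prob_space \<theta>" and S: "sets \<theta> = sets borel" and Xm: "X \<in> borel_measurable borel" and t: "0 \<le> t"
  shows "(\<integral>\<^sup>+ s. emeasure \<theta> {p. ennreal (t - s) < X p} * indicator {0..t} s \<partial>lborel) \<le> (\<integral>\<^sup>+ p. X p \<partial>\<theta>)"
proof -
  interpret prob_space \<theta> by (rule P)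
  interpret PS: pair_sigma_finite lborel \<theta> proof qed
  have Xm': "X \<in> borel_measurable \<theta>" using Xm measurable_cong_sets[OF S refl] by blast
  have [measurable]: "(\<lambda>(s::real, p). indicator {p. ennreal (t - s) < X p} p * (indicator {0..t} s :: ennreal)) \<in> borel_measurable (lborel \<Otimes>\<^sub>M \<theta>)"
    using Xm' by measurable
  have sp: "space \<theta> = UNIV" using sets_eq_imp_space_eq[OF S] by simp
  have sm: "{p. ennreal (t - s) < X p} \<in> sets \<theta>" for s
  proof -
    have "{p \<in> space \<theta>. ennreal (t - s) < X p} \<in> sets \<theta>" using Xm' by measurable
    then show ?thesis using sp by simp
  qed
  have "(\<integral>\<^sup>+ s. emeasure \<theta> {p. ennreal (t - s) < X p} * indicator {0..t} s \<partial>lborel)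
     = (\<integral>\<^sup>+ s. (\<integral>\<^sup>+ p. indicator {p. ennreal (t - s) < X p} p * indicator {0..t} s \<partial>\<theta>) \<partial>lborel)"
    apply (intro nn_integral_cong)
    apply (subst nn_integral_multc)
    using Xm' apply measurable
    by (simp add: sm)
  also have "\<dots> = (\<integral>\<^sup>+ p. (\<integral>\<^sup>+ s. indicator {p. ennreal (t - s) < X p} p * indicator {0..t} s \<partial>lborel) \<partial>\<theta>)"
    by (rule PS.Fubini'[of "\<lambda>s p. indicator {p. ennreal (t - s) < X p} p * indicator {0..t} s", symmetric]) measurable
  also have "\<dots> \<le> (\<integral>\<^sup>+ p. X p \<partial>\<theta>)"
  proof (intro nn_integral_mono)
    fix p
    show "(\<integral>\<^sup>+ s. indicator {p. ennreal (t - s) < X p} p * indicator {0..t} s \<partial>lborel) \<le> X p"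
    proof (cases "X p")
      case (real r)
      have "(\<integral>\<^sup>+ s. indicator {p. ennreal (t - s) < X p} p * indicator {0..t} s \<partial>lborel)
          \<le> (\<integral>\<^sup>+ s. indicator {t-r..t} s \<partial>lborel)"
        apply (intro nn_integral_mono)
        using real by (auto split: split_indicator simp: ennreal_less_iff)
      also have "\<dots> = ennreal r" using real by simp
      finally show ?thesis using real by simp
    qed simp
  qed
  finally show ?thesis .
qed

lemma tail_small:
  fixes \<theta> :: "(ennreal \<times> ennreal) measure" and c :: ennreal and lam :: real
  assumes P: "prob_space \<theta>" and S: "sets \<theta> = sets borel"
    and fin: "(\<integral>\<^sup>+ x. min (fst x) (snd x) \<partial>\<theta>) < \<top>" and L: "ennreal lam * c < 1"
  shows "\<exists>n::nat. ennreal lam * (c + (\<integral>\<^sup>+ x. min (fst x) (snd x) * indicator {p. ennreal (real n) < snd p \<and> snd p < \<top>} x \<partial>\<theta>)) < 1"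
proof -
  define f where "f = (\<lambda>(n::nat) x. min (fst x) (snd x) * indicator {p. ennreal (real n) < snd p \<and> snd p < \<top>} x)"
  have bm: "(\<lambda>x. min (fst x) (snd x) * indicator {p. ennreal (real n) < snd p \<and> snd p < \<top>} x) \<in> borel_measurable borel" for n :: nat
  proof -
    have "(\<lambda>x::ennreal\<times>ennreal. min (fst x) (snd x) * indicator {p. ennreal (real n) < snd p \<and> snd p < \<top>} x) \<in> borel_measurable (borel \<Otimes>\<^sub>M borel)"
      by measurable
    then show ?thesis by (simp add: borel_prod)
  qed
  have fm: "f n \<in> borel_measurable \<theta>" for n
    using bm[of n] measurable_cong_sets[OF S refl] unfolding f_def by auto
  have dec: "decseq f"
  proof (rule decseq_SucI, rule le_funI)
    fix n :: nat and x :: "ennreal \<times> ennreal"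
    have "ennreal (real n) \<le> ennreal (real (Suc n))" by simp
    then have "ennreal (real (Suc n)) < snd x \<Longrightarrow> ennreal (real n) < snd x"
      using order.strict_trans1 by blast
    then show "f (Suc n) x \<le> f n x" unfolding f_def
      by (auto split: split_indicator simp del: of_nat_Suc)
  qed
  have fle: "(\<integral>\<^sup>+ x. f n x \<partial>\<theta>) < \<top>" for n
  proof -
    have "(\<integral>\<^sup>+ x. f n x \<partial>\<theta>) \<le> (\<integral>\<^sup>+ x. min (fst x) (snd x) \<partial>\<theta>)"
      unfolding f_def by (intro nn_integral_mono) (auto split: split_indicator)
    then show ?thesis using fin by (simp add: order.strict_trans1)
  qed
  have inf0: "(INF n. f n x) = 0" for x
  proof (cases "snd x")
    case (real d)
    obtain n :: nat where "d < real n" using reals_Archimedean2 by blast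
    then have "f n x = 0" using real unfolding f_def
      by (auto split: split_indicator simp: ennreal_less_iff)
    then show ?thesis by (metis INF_lower2 iso_tuple_UNIV_I le_zero_eq order_refl)
  next
    case top
    then have "f 0 x = 0" unfolding f_def by (auto split: split_indicator)
    then show ?thesis by (metis INF_lower2 iso_tuple_UNIV_I le_zero_eq order_refl)
  qed
  have "(\<integral>\<^sup>+ x. (INF n. f n x) \<partial>\<theta>) = (INF n. integral\<^sup>N \<theta> (f n))"
    apply (rule nn_integral_monotone_convergence_INF_decseq[OF dec])
    using fm fle by auto
  then have "(INF n. integral\<^sup>N \<theta> (f n)) = 0"
    using inf0 by simp
  moreover have "decseq (\<lambda>n. integral\<^sup>N \<theta> (f n))"
  proof (rule decseq_SucI)
    fix n show "integral\<^sup>N \<theta> (f (Suc n)) \<le> integral\<^sup>N \<theta> (f n)"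
      using dec[THEN decseq_SucD, of n] by (intro nn_integral_mono) (metis le_funD)
  qed
  ultimately have lim: "(\<lambda>n. integral\<^sup>N \<theta> (f n)) \<longlonglongrightarrow> 0"
    using LIMSEQ_INF by metis
  have "(\<lambda>n. ennreal lam * (c + integral\<^sup>N \<theta> (f n))) \<longlonglongrightarrow> ennreal lam * (c + 0)"
    by (intro ennreal_tendsto_cmult tendsto_add tendsto_const lim) simp
  then have "eventually (\<lambda>n. ennreal lam * (c + integral\<^sup>N \<theta> (f n)) < 1) sequentially"
    using L by (intro order_tendstoD(2)) auto
  then obtain n where "ennreal lam * (c + integral\<^sup>N \<theta> (f n)) < 1"
    using eventually_sequentially by auto
  then show ?thesis unfolding f_def by auto
qed

lemma meas_th:
  fixes \<theta> :: "(ennreal \<times> ennreal) measure" and g :: "ennreal \<times> ennreal \<Rightarrow> ennreal"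
  assumes S: "sets \<theta> = sets borel" and g: "g \<in> borel_measurable (borel \<Otimes>\<^sub>M borel)"
  shows "g \<in> borel_measurable \<theta>"
proof -
  have "g \<in> borel_measurable borel" using g by (simp add: borel_prod)
  then show ?thesis using measurable_cong_sets[OF S refl] by blast
qed

lemma min_bound:
  fixes \<theta> :: "(ennreal \<times> ennreal) measure" and M K :: real
  assumes P: "prob_space \<theta>" and S: "sets \<theta> = sets borel" and M: "1 \<le> M" and K: "0 \<le> K"
  shows "(\<integral>\<^sup>+ x. min (fst x * ennreal M) (snd x) \<partial>\<theta>)
    \<le> ennreal M * (\<integral>\<^sup>+ x. fst x * indicator {p. snd p = \<top>} x \<partial>\<theta>) + ennreal K
      + ennreal M * (\<integral>\<^sup>+ x. min (fst x) (snd x) * indicator {p. ennreal K < snd p \<and> snd p < \<top>} x \<partial>\<theta>)"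
proof -
  interpret prob_space \<theta> by (rule P)
  have m1: "(\<lambda>x. fst x * indicator {p. snd p = \<top>} x) \<in> borel_measurable \<theta>"
    by (rule meas_th[OF S]) measurable
  have m2: "(\<lambda>x. min (fst x) (snd x) * indicator {p. ennreal K < snd p \<and> snd p < \<top>} x) \<in> borel_measurable \<theta>"
    by (rule meas_th[OF S]) measurable
  have pw: "min (fst x * ennreal M) (snd x) \<le> ennreal M * (fst x * indicator {p. snd p = \<top>} x) + ennreal K
      + ennreal M * (min (fst x) (snd x) * indicator {p. ennreal K < snd p \<and> snd p < \<top>} x)" for x
  proof (cases "snd x")
    case top
    then show ?thesis by (simp add: mult.commute)
  next
    case (real d)
    show ?thesis
    proof (cases "d \<le> K")
      case True
      then have "min (fst x * ennreal M) (snd x) \<le> ennreal K" using real by (simp add: min.coboundedI2)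
      then show ?thesis by (simp add: add_increasing2 add_increasing order_trans[OF _ add_increasing])
    next
      case False
      have "min (fst x * ennreal M) (snd x) \<le> ennreal M * min (fst x) (snd x)"
      proof (cases "fst x \<le> snd x")
        case True
        then have "min (fst x) (snd x) = fst x" by simp
        then show ?thesis by (simp add: mult.commute)
      next
        case F: False
        have "snd x = 1 * snd x" by simp
        also have "\<dots> \<le> ennreal M * snd x" using M by (intro mult_right_mono) auto
        then have "min (fst x * ennreal M) (snd x) \<le> ennreal M * snd x" by (simp add: min.coboundedI2)
        moreover have "min (fst x) (snd x) = snd x" using F by simp
        ultimately show ?thesis by simp
      qed
      also have "\<dots> = ennreal M * (min (fst x) (snd x) * indicator {p. ennreal K < snd p \<and> snd p < \<top>} x)"
        using False real K by (simp add: ennreal_less_iff indicator_def)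
      also have "\<dots> \<le> ennreal M * (fst x * indicator {p. snd p = \<top>} x) + ennreal K
      + ennreal M * (min (fst x) (snd x) * indicator {p. ennreal K < snd p \<and> snd p < \<top>} x)"
        by simp
      finally show ?thesis .
    qed
  qed
  have "(\<integral>\<^sup>+ x. min (fst x * ennreal M) (snd x) \<partial>\<theta>) \<le> (\<integral>\<^sup>+ x. ennreal M * (fst x * indicator {p. snd p = \<top>} x) + ennreal K
      + ennreal M * (min (fst x) (snd x) * indicator {p. ennreal K < snd p \<and> snd p < \<top>} x) \<partial>\<theta>)"
    by (intro nn_integral_mono pw)
  also have "\<dots> = ennreal M * (\<integral>\<^sup>+ x. fst x * indicator {p. snd p = \<top>} x \<partial>\<theta>) + ennreal K
      + ennreal M * (\<integral>\<^sup>+ x. min (fst x) (snd x) * indicator {p. ennreal K < snd p \<and> snd p < \<top>} x \<partial>\<theta>)"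
    using m1 m2 by (simp add: nn_integral_add nn_integral_cmult emeasure_space_1)
  finally show ?thesis .
qed

lemma set_int_le_nn:
  fixes g :: "real \<Rightarrow> real"
  assumes "\<And>s. s \<in> A \<Longrightarrow> 0 \<le> g s"
  shows "ennreal (LINT s:A|lborel. g s) \<le> (\<integral>\<^sup>+ s. ennreal (g s) * indicator A s \<partial>lborel)"
proof (cases "integrable lborel (\<lambda>s. indicator A s *\<^sub>R g s)")
  case True
  have "(\<integral>\<^sup>+ s. ennreal (indicator A s *\<^sub>R g s) \<partial>lborel) = ennreal (integral\<^sup>L lborel (\<lambda>s. indicator A s *\<^sub>R g s))"
    by (rule nn_integral_eq_integral[OF True]) (auto simp: assms indicator_def)
  moreover have "(\<integral>\<^sup>+ s. ennreal (indicator A s *\<^sub>R g s) \<partial>lborel) = (\<integral>\<^sup>+ s. ennreal (g s) * indicator A s \<partial>lborel)"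
    by (intro nn_integral_cong) (auto simp: indicator_def)
  ultimately show ?thesis by (simp add: set_lebesgue_integral_def)
next
  case False
  then show ?thesis by (simp add: set_lebesgue_integral_def not_integrable_integral_eq)
qed

lemma pos_z:
  assumes "fluid_solution lam \<theta> \<zeta>0 z" and "0 < r"
  shows "0 < z r"
proof -
  have nn: "\<forall>t\<ge>0. z t \<ge> 0" and inf: "\<forall>a>0. (INF t\<in>{a<..}. z t) > 0"
    using assms(1) unfolding fluid_solution_def by auto
  have "bdd_below (z ` {r/2<..})" using nn assms(2)
    by (intro bdd_belowI2[of _ 0]) auto
  then have "(INF t\<in>{r/2<..}. z t) \<le> z r" using assms(2) by (intro cINF_lower) auto
  moreover have "(INF t\<in>{r/2<..}. z t) > 0" using inf assms(2) by simp
  ultimately show ?thesis by simp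
qed

lemma S_lower:
  assumes sol: "fluid_solution lam \<theta> \<zeta>0 z" and s: "0 \<le> s" "s \<le> t" and M: "0 < M"
    and bd: "\<forall>r\<in>{0..t}. z r \<le> M"
  shows "ennreal ((t - s) / M) \<le> Sfun z s t"
proof -
  have "ennreal ((t - s) / M) = (\<integral>\<^sup>+ r. ennreal (1 / M) * indicator {s..t} r \<partial>lborel)"
    using s M by (simp add: nn_integral_cmult_indicator ennreal_mult[symmetric] divide_inverse mult.commute)
  also have "\<dots> \<le> (\<integral>\<^sup>+ r. ennreal (1 / z r) * indicator {s..t} r \<partial>lborel)"
  proof (rule nn_integral_mono_AE)
    show "AE r in lborel. ennreal (1 / M) * indicator {s..t} r \<le> ennreal (1 / z r) * indicator {s..t} r"
      using AE_lborel_singleton[of 0]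
    proof eventually_elim
      case (elim r)
      show ?case
      proof (cases "r \<in> {s..t}")
        case True
        then have "0 < r" using elim s by auto
        then have "0 < z r" by (rule pos_z[OF sol])
        moreover have "z r \<le> M" using bd True s by auto
        ultimately have "1 / M \<le> 1 / z r" by (simp add: frac_le)
        then show ?thesis using True by (simp add: ennreal_leI)
      qed simp
    qed
  qed
  finally show ?thesis unfolding Sfun_def .
qed

lemma key:
  assumes D: "fluid_data lam \<theta> \<zeta>0" and sol: "fluid_solution lam \<theta> \<zeta>0 z"
    and t: "0 \<le> t" and M: "1 \<le> M" and bd: "\<forall>r\<in>{0..t}. z r \<le> M"
  shows "ennreal (z t) \<le> ennreal (measure \<zeta>0 (space \<zeta>0)) + ennreal lam * (\<integral>\<^sup>+ x. min (fst x * ennreal M) (snd x) \<partial>\<theta>)"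
proof -
  have lam: "lam > 0" and P: "prob_space \<theta>" and S: "sets \<theta> = sets borel" and F0: "finite_measure \<zeta>0"
    using D unfolding fluid_data_def by auto
  interpret prob_space \<theta> by (rule P)
  define X where "X = (\<lambda>p::ennreal\<times>ennreal. min (fst p * ennreal M) (snd p))"
  have Xb: "X \<in> borel_measurable borel"
  proof -
    have "X \<in> borel_measurable (borel \<Otimes>\<^sub>M borel)" unfolding X_def by measurable
    then show ?thesis by (simp add: borel_prod)
  qed
  have Xm': "X \<in> borel_measurable \<theta>" using Xb measurable_cong_sets[OF S refl] by blast
  have sp: "space \<theta> = UNIV" using sets_eq_imp_space_eq[OF S] by simp
  have sm: "{p. ennreal (t - s) < X p} \<in> sets \<theta>" for s
  proof -
    have "{p \<in> space \<theta>. ennreal (t - s) < X p} \<in> sets \<theta>" using Xm' by measurable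
    then show ?thesis using sp by simp
  qed
  define g where "g = (\<lambda>s. measure \<theta> {p. fst p > Sfun z s t \<and> snd p > ennreal (t - s)})"
  define I where "I = (LINT s:{0..t}|lborel. g s)"
  have eq: "z t = measure \<zeta>0 {p. fst p > Sfun z 0 t \<and> snd p > ennreal t} + lam * I"
  proof -
    have "\<forall>t\<ge>0. z t =
        measure \<zeta>0 {p. fst p > Sfun z 0 t \<and> snd p > ennreal t}
        + lam * (LINT s:{0..t}|lborel.
             measure \<theta> {p. fst p > Sfun z s t \<and> snd p > ennreal (t - s)})"
      using sol unfolding fluid_solution_def by blast
    then show ?thesis using t unfolding g_def I_def by blast
  qed
  have I0: "0 \<le> I" unfolding I_def g_def set_lebesgue_integral_def by (intro integral_nonneg_AE AE_I2) (simp only: real_scaleR_def, intro mult_nonneg_nonneg measure_nonneg, simp)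
  have m0: "measure \<zeta>0 {p. fst p > Sfun z 0 t \<and> snd p > ennreal t} \<le> measure \<zeta>0 (space \<zeta>0)"
    by (rule finite_measure.bounded_measure[OF F0])
  have gle: "ennreal (g s) * indicator {0..t} s \<le> emeasure \<theta> {p. ennreal (t - s) < X p} * indicator {0..t} s" for s
  proof (cases "s \<in> {0..t}")
    case True
    have sub: "{p. fst p > Sfun z s t \<and> snd p > ennreal (t - s)} \<subseteq> {p. ennreal (t - s) < X p}"
    proof
      fix p assume "p \<in> {p. fst p > Sfun z s t \<and> snd p > ennreal (t - s)}"
      then have p1: "Sfun z s t < fst p" and p2: "ennreal (t - s) < snd p" by auto
      have "ennreal ((t - s) / M) \<le> Sfun z s t" using S_lower[OF sol _ _ _ bd] True M by auto
      then have "ennreal ((t - s) / M) < fst p" using p1 by (rule le_less_trans)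
      then have "ennreal ((t - s) / M) * ennreal M < fst p * ennreal M"
        using M by (intro ennreal_mult_strict_right_mono) auto
      moreover have "ennreal ((t - s) / M) * ennreal M = ennreal (t - s)"
        using M True by (simp add: ennreal_mult[symmetric])
      ultimately show "p \<in> {p. ennreal (t - s) < X p}" using p2 unfolding X_def by auto
    qed
    have "ennreal (g s) = emeasure \<theta> {p. fst p > Sfun z s t \<and> snd p > ennreal (t - s)}"
      unfolding g_def by (simp add: emeasure_eq_measure)
    also have "\<dots> \<le> emeasure \<theta> {p. ennreal (t - s) < X p}"
      by (rule emeasure_mono[OF sub sm])
    finally show ?thesis using True by simp
  qed simp
  have "ennreal I \<le> (\<integral>\<^sup>+ s. ennreal (g s) * indicator {0..t} s \<partial>lborel)"
    unfolding I_def by (rule set_int_le_nn) (simp add: g_def)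
  also have "\<dots> \<le> (\<integral>\<^sup>+ s. emeasure \<theta> {p. ennreal (t - s) < X p} * indicator {0..t} s \<partial>lborel)"
    by (intro nn_integral_mono gle)
  also have "\<dots> \<le> (\<integral>\<^sup>+ p. X p \<partial>\<theta>)"
    by (rule tail_bound[OF P S Xb t])
  finally have Ib: "ennreal I \<le> (\<integral>\<^sup>+ p. X p \<partial>\<theta>)" .
  have "ennreal (z t) = ennreal (measure \<zeta>0 {p. fst p > Sfun z 0 t \<and> snd p > ennreal t}) + ennreal lam * ennreal I"
  proof -
    have A0: "0 \<le> measure \<zeta>0 {p. fst p > Sfun z 0 t \<and> snd p > ennreal t}" by (rule measure_nonneg)
    have LI: "0 \<le> lam * I" using I0 lam by simp
    have "ennreal (z t) = ennreal (measure \<zeta>0 {p. fst p > Sfun z 0 t \<and> snd p > ennreal t}) + ennreal (lam * I)"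
      unfolding eq by (rule ennreal_plus[OF A0 LI])
    also have "ennreal (lam * I) = ennreal lam * ennreal I"
      using I0 lam by (intro ennreal_mult) auto
    finally show ?thesis .
  qed
  also have "\<dots> \<le> ennreal (measure \<zeta>0 (space \<zeta>0)) + ennreal lam * (\<integral>\<^sup>+ p. X p \<partial>\<theta>)"
    using m0 Ib by (intro add_mono mult_left_mono) (auto simp: ennreal_leI)
  finally show ?thesis unfolding X_def .
qed

theorem mainTheorem5:
  fixes lam :: real and \<theta> \<zeta>0 :: "(ennreal \<times> ennreal) measure" and z :: "real \<Rightarrow> real"
  assumes "fluid_data lam \<theta> \<zeta>0"
    and "ennreal lam * (\<integral>\<^sup>+ x. fst x * indicator {p. snd p = \<top>} x \<partial>\<theta>) < 1"
    and "(\<integral>\<^sup>+ x. min (fst x) (snd x) \<partial>\<theta>) < \<top>"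
    and "fluid_solution lam \<theta> \<zeta>0 z"
  shows "\<exists>M. \<forall>t\<ge>0. z t \<le> M"
proof -
  have lam: "lam > 0" and P: "prob_space \<theta>" and S: "sets \<theta> = sets borel"
    using assms(1) unfolding fluid_data_def by auto
  have cont: "continuous_on {0..} z" using assms(4) unfolding fluid_solution_def by blast
  define c where "c = (\<integral>\<^sup>+ x. fst x * indicator {p. snd p = \<top>} x \<partial>\<theta>)"
  obtain n :: nat where n: "ennreal lam * (c + (\<integral>\<^sup>+ x. min (fst x) (snd x) * indicator {p. ennreal (real n) < snd p \<and> snd p < \<top>} x \<partial>\<theta>)) < 1"
    using tail_small[OF P S assms(3), of lam c] assms(2) unfolding c_def by blast
  define K where "K = real n"
  define e where "e = (\<integral>\<^sup>+ x. min (fst x) (snd x) * indicator {p. ennreal K < snd p \<and> snd p < \<top>} x \<partial>\<theta>)"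
  have r1: "ennreal lam * (c + e) < 1" using n unfolding e_def K_def by simp
  have "c + e < \<top>"
  proof (rule ccontr)
    assume "\<not> c + e < \<top>"
    then have "c + e = \<top>" using top.not_eq_extremum by blast
    then have "ennreal lam * (c + e) = \<top>" using lam by (simp add: ennreal_mult_eq_top_iff)
    then show False using r1 by simp
  qed
  then have "c < \<top>" "e < \<top>" by auto
  then obtain c' e' where c': "c = ennreal c'" "0 \<le> c'" and e': "e = ennreal e'" "0 \<le> e'"
    by (metis ennreal_cases less_irrefl)
  define r where "r = lam * (c' + e')"
  have r0: "0 \<le> r" unfolding r_def using lam c' e' by simp
  have ce: "c + e = ennreal (c' + e')" using c' e' by (simp add: ennreal_plus)
  have "ennreal r = ennreal lam * (c + e)" unfolding r_def ce using lam c' e' by (intro ennreal_mult) auto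
  then have "ennreal r < 1" using r1 by simp
  then have rl: "r < 1" by (simp add: ennreal_less_iff r0)
  define m0 where "m0 = measure \<zeta>0 (space \<zeta>0)"
  have m0p: "0 \<le> m0" unfolding m0_def by simp
  define B where "B = max 1 ((m0 + lam * K) / (1 - r))"
  have "z t \<le> B" if t: "0 \<le> t" for t
  proof -
    have "continuous_on {0..t} z" using cont by (rule continuous_on_subset) auto
    then obtain t' where t': "t' \<in> {0..t}" and mx: "\<forall>y\<in>{0..t}. z y \<le> z t'"
      using continuous_attains_sup[of "{0..t}" z] t by auto
    show ?thesis
    proof (cases "z t' \<le> 1")
      case True
      then show ?thesis using mx t unfolding B_def by force
    next
      case False
      define M where "M = z t'"
      have M1: "1 \<le> M" using False unfolding M_def by simp
      have bd: "\<forall>r\<in>{0..t'}. z r \<le> M" using mx t' unfolding M_def by auto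
      have "ennreal M \<le> ennreal m0 + ennreal lam * (\<integral>\<^sup>+ x. min (fst x * ennreal M) (snd x) \<partial>\<theta>)"
        using key[OF assms(1) assms(4) _ M1 bd] t' unfolding M_def m0_def by auto
      also have "\<dots> \<le> ennreal m0 + ennreal lam * (ennreal M * c + ennreal K + ennreal M * e)"
        using min_bound[OF P S M1, of K] unfolding c_def e_def K_def
        by (intro add_mono mult_left_mono) auto
      also have "\<dots> = ennreal (m0 + lam * (M * c' + K + M * e'))"
      proof -
        have K0: "0 \<le> K" unfolding K_def by simp
        have M0: "0 \<le> M" using M1 by simp
        have a1: "ennreal M * c = ennreal (M * c')" using c' M0 by (simp add: ennreal_mult)
        have a2: "ennreal M * e = ennreal (M * e')" using e' M0 by (simp add: ennreal_mult)
        have s1: "ennreal (M * c') + ennreal K = ennreal (M * c' + K)"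
          using c' M0 K0 by (intro ennreal_plus[symmetric]) auto
        have s2: "ennreal (M * c' + K) + ennreal (M * e') = ennreal (M * c' + K + M * e')"
          using c' e' M0 K0 by (intro ennreal_plus[symmetric]) auto
        have p0: "0 \<le> M * c' + K + M * e'" using c' e' M0 K0 by simp
        have s3: "ennreal lam * ennreal (M * c' + K + M * e') = ennreal (lam * (M * c' + K + M * e'))"
          using lam p0 by (intro ennreal_mult[symmetric]) auto
        have s4: "ennreal m0 + ennreal (lam * (M * c' + K + M * e')) = ennreal (m0 + lam * (M * c' + K + M * e'))"
          using lam p0 m0p by (intro ennreal_plus[symmetric]) auto
        show ?thesis unfolding a1 a2 s1 s2 s3 s4 ..
      qed
      finally have "M \<le> m0 + lam * (M * c' + K + M * e')"
        by (rule ennreal_le_iff[THEN iffD1, rotated]) (use m0p lam c' e' M1 in \<open>simp add: K_def\<close>)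
      then have "M * (1 - r) \<le> m0 + lam * K" unfolding r_def by (simp add: algebra_simps)
      then have "M \<le> (m0 + lam * K) / (1 - r)" using rl by (simp add: pos_le_divide_eq)
      then have "M \<le> B" unfolding B_def by simp
      then show ?thesis using mx t unfolding M_def by force
    qed
  qed
  then show ?thesis by blast
qed
end
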